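(* Let $G$ be a finite non-abelian group admitting a GRR. Then $G$ admits a $2$-GRR.
   Context: A group $G$ admits a GRR if there is a Cayley graph $\mathrm{Cay}(G,R)$ (vertex set $G$, edges $\{g,rg\}$, $R=R^{-1}$, $1\notin R$) whose automorphism group is isomorphic to $G$. An $m$-GRR for $G$ is a finite regular simple graph admitting a semiregular group of automorphisms isomorphic to $G$ with exactly $m$ orbits on vertices and whose full automorphism group is isomorphic to $G$. *)

theory Defs
  imports "HOL-Algebra.Algebra"
begin

definition simple_graph :: "'v set \<Rightarrow> ('v \<Rightarrow> 'v \<Rightarrow> bool) \<Rightarrow> bool" where
  "simple_graph V E \<longleftrightarrow>
     (\<forall>x y. E x y \<longrightarrow> x \<in> V \<and> y \<in> V) \<and>
     (\<forall>x y. E x y \<longrightarrow> E y x) \<and> (\<forall>x. \<not> E x x)"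

definition regular_graph :: "'v set \<Rightarrow> ('v \<Rightarrow> 'v \<Rightarrow> bool) \<Rightarrow> bool" where
  "regular_graph V E \<longleftrightarrow> (\<exists>k. \<forall>v\<in>V. card {u\<in>V. E v u} = k)"

definition graph_aut_group :: "'v set \<Rightarrow> ('v \<Rightarrow> 'v \<Rightarrow> bool) \<Rightarrow> ('v \<Rightarrow> 'v) monoid" where
  "graph_aut_group V E = BijGroup V \<lparr>carrier :=
     {f \<in> Bij V. \<forall>x\<in>V. \<forall>y\<in>V. E x y \<longleftrightarrow> E (f x) (f y)}\<rparr>"

definition cayley_adj :: "('a, 'b) monoid_scheme \<Rightarrow> 'a set \<Rightarrow> 'a \<Rightarrow> 'a \<Rightarrow> bool" where
  "cayley_adj G R g h \<longleftrightarrow> g \<in> carrier G \<and> h \<in> carrier G \<and> (\<exists>r\<in>R. h = r \<otimes>\<^bsub>G\<^esub> g)"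

definition has_GRR :: "('a, 'b) monoid_scheme \<Rightarrow> bool" where
  "has_GRR G \<longleftrightarrow> (\<exists>R. R \<subseteq> carrier G \<and> (\<forall>r\<in>R. inv\<^bsub>G\<^esub> r \<in> R) \<and> \<one>\<^bsub>G\<^esub> \<notin> R \<and>
       graph_aut_group (carrier G) (cayley_adj G R) \<cong> G)"

text \<open>m-GRR: a finite regular simple graph (vertices drawn from nat, which is
no loss of generality for finite graphs) admitting a semiregular group of
automorphisms isomorphic to G with exactly m orbits, and whose full
automorphism group is isomorphic to G.\<close>

definition has_m_GRR :: "('a, 'b) monoid_scheme \<Rightarrow> nat \<Rightarrow> bool" where
  "has_m_GRR G m \<longleftrightarrow> (\<exists>(V :: nat set) E H.
       finite V \<and> simple_graph V E \<and> regular_graph V E \<and>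
       subgroup H (graph_aut_group V E) \<and>
       (graph_aut_group V E)\<lparr>carrier := H\<rparr> \<cong> G \<and>
       (\<forall>h\<in>H. \<forall>v\<in>V. h v = v \<longrightarrow> h = \<one>\<^bsub>graph_aut_group V E\<^esub>) \<and>
       card ((\<lambda>v. (\<lambda>h. h v) ` H) ` V) = m \<and>
       graph_aut_group V E \<cong> G)"

end

theory Submission
  imports Defs
begin

lemma gag_carrier: "carrier (graph_aut_group V E) =
   {f \<in> Bij V. \<forall>x\<in>V. \<forall>y\<in>V. E x y \<longleftrightarrow> E (f x) (f y)}"
  by (simp add: graph_aut_group_def)

lemma gag_mult: "f \<in> carrier (graph_aut_group V E) \<Longrightarrow> g \<in> carrier (graph_aut_group V E) \<Longrightarrow>
   f \<otimes>\<^bsub>graph_aut_group V E\<^esub> g = compose V f g"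
  by (simp add: graph_aut_group_def BijGroup_def gag_carrier)

lemma gag_one: "\<one>\<^bsub>graph_aut_group V E\<^esub> = (\<lambda>x\<in>V. x)"
  by (simp add: graph_aut_group_def BijGroup_def)

lemma gag_subgroup: "subgroup (carrier (graph_aut_group V E)) (BijGroup V)"
proof -
  interpret B: group "BijGroup V" by (rule group_BijGroup)
  show ?thesis
  proof (rule B.subgroupI)
    show "carrier (graph_aut_group V E) \<subseteq> carrier (BijGroup V)"
      by (auto simp: gag_carrier BijGroup_def)
    show "carrier (graph_aut_group V E) \<noteq> {}"
      using id_Bij[of V] by (auto simp: gag_carrier)
  next
    fix f assume f: "f \<in> carrier (graph_aut_group V E)"
    then have fB: "f \<in> Bij V" and fE: "\<forall>x\<in>V. \<forall>y\<in>V. E x y \<longleftrightarrow> E (f x) (f y)" by (auto simp: gag_carrier)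
    have bij: "bij_betw f V V" using fB by (simp add: Bij_def)
    have "inv\<^bsub>BijGroup V\<^esub> f = (\<lambda>x\<in>V. inv_into V f x)"
      using inv_BijGroup fB by (metis BijGroup_def monoid.simps(1) restrict_ext)
    moreover have "(\<lambda>x\<in>V. inv_into V f x) \<in> carrier (graph_aut_group V E)"
    proof -
      have "\<forall>x\<in>V. \<forall>y\<in>V. E x y \<longleftrightarrow> E (inv_into V f x) (inv_into V f y)"
      proof (intro ballI)
        fix x y assume xy: "x \<in> V" "y \<in> V"
        have "inv_into V f x \<in> V" "inv_into V f y \<in> V" using xy bij by (auto simp: Bij_inv_into_mem fB)
        moreover have "f (inv_into V f x) = x" "f (inv_into V f y) = y"
          using xy bij by (auto simp: bij_betw_inv_into_right)
        ultimately show "E x y \<longleftrightarrow> E (inv_into V f x) (inv_into V f y)" using fE by metis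
      qed
      then show ?thesis using restrict_inv_into_Bij[OF fB] by (auto simp: gag_carrier)
    qed
    ultimately show "inv\<^bsub>BijGroup V\<^esub> f \<in> carrier (graph_aut_group V E)" by simp
  next
    fix f g assume f: "f \<in> carrier (graph_aut_group V E)" and g: "g \<in> carrier (graph_aut_group V E)"
    then have fB: "f \<in> Bij V" and fE: "\<forall>x\<in>V. \<forall>y\<in>V. E x y \<longleftrightarrow> E (f x) (f y)"
     and gB: "g \<in> Bij V" and gE: "\<forall>x\<in>V. \<forall>y\<in>V. E x y \<longleftrightarrow> E (g x) (g y)" by (auto simp: gag_carrier)
    have "f \<otimes>\<^bsub>BijGroup V\<^esub> g = compose V f g" using fB gB by (simp add: BijGroup_def)
    moreover have "compose V f g \<in> carrier (graph_aut_group V E)"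
    proof -
      have gV: "\<And>x. x \<in> V \<Longrightarrow> g x \<in> V" using gB Bij_imp_funcset by blast
      have "\<forall>x\<in>V. \<forall>y\<in>V. E x y \<longleftrightarrow> E (compose V f g x) (compose V f g y)"
      proof (intro ballI)
        fix x y assume xy: "x \<in> V" "y \<in> V"
        have "E x y \<longleftrightarrow> E (g x) (g y)" using gE xy by blast
        also have "\<dots> \<longleftrightarrow> E (f (g x)) (f (g y))" using fE gV xy by blast
        finally show "E x y \<longleftrightarrow> E (compose V f g x) (compose V f g y)" using xy by (simp add: compose_def)
      qed
      then show ?thesis using compose_Bij[OF fB gB] by (simp add: gag_carrier)
    qed
    ultimately show "f \<otimes>\<^bsub>BijGroup V\<^esub> g \<in> carrier (graph_aut_group V E)" by simp
  qed
qed

lemma gag_group: "group (graph_aut_group V E)"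
  using subgroup.subgroup_is_group[OF gag_subgroup group_BijGroup]
  by (simp add: graph_aut_group_def gag_carrier)

lemma transfer_m_GRR:
  fixes V :: "'v set" and E :: "'v \<Rightarrow> 'v \<Rightarrow> bool" and G :: "('a,'b) monoid_scheme"
  assumes finV: "finite V" and sg: "simple_graph V E" and rg: "regular_graph V E"
    and semi: "\<forall>h\<in>carrier (graph_aut_group V E). \<forall>v\<in>V. h v = v \<longrightarrow> h = \<one>\<^bsub>graph_aut_group V E\<^esub>"
    and orb: "card ((\<lambda>v. (\<lambda>h. h v) ` carrier (graph_aut_group V E)) ` V) = m"
    and iso: "graph_aut_group V E \<cong> G"
  shows "has_m_GRR G m"
proof -
  obtain f :: "'v \<Rightarrow> nat" and n where fV: "f ` V = {i. i < n}" and injf: "inj_on f V"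
    using finite_imp_inj_to_nat_seg[OF finV] by blast
  define W where "W = f ` V"
  define g where "g = inv_into V f"
  have gf: "\<And>v. v \<in> V \<Longrightarrow> g (f v) = v" using injf by (simp add: g_def)
  have fg: "\<And>w. w \<in> W \<Longrightarrow> f (g w) = w" by (simp add: g_def W_def f_inv_into_f)
  have gW: "\<And>w. w \<in> W \<Longrightarrow> g w \<in> V" by (auto simp: g_def W_def inv_into_into)
  have fVW: "\<And>v. v \<in> V \<Longrightarrow> f v \<in> W" by (simp add: W_def)
  define E' where "E' = (\<lambda>x y. x \<in> W \<and> y \<in> W \<and> E (g x) (g y))"
  have E'f: "\<And>x y. x \<in> V \<Longrightarrow> y \<in> V \<Longrightarrow> E' (f x) (f y) \<longleftrightarrow> E x y"
    using fVW gf by (simp add: E'_def)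
  define A where "A = graph_aut_group V E"
  define B where "B = graph_aut_group W E'"
  define \<Psi> where "\<Psi> = (\<lambda>h. \<lambda>v\<in>V. g (h (f v)))"
  define \<Phi> where "\<Phi> = (\<lambda>k. \<lambda>w\<in>W. f (k (g w)))"
  have \<Psi>A: "\<Psi> h \<in> carrier A" if h: "h \<in> carrier B" for h
  proof -
    have hB: "h \<in> Bij W" and hE: "\<forall>x\<in>W. \<forall>y\<in>W. E' x y \<longleftrightarrow> E' (h x) (h y)"
      using h by (auto simp: B_def gag_carrier)
    have hW: "\<And>w. w \<in> W \<Longrightarrow> h w \<in> W" using hB Bij_imp_funcset by blast
    have hbij: "bij_betw h W W" using hB by (simp add: Bij_def)
    have "bij_betw (\<Psi> h) V V"
    proof (rule bij_betw_byWitness[where f'="\<lambda>v. g (inv_into W h (f v))"])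
      show "\<forall>a\<in>V. g (inv_into W h (f (\<Psi> h a))) = a"
        using hW fVW gW fg gf hbij by (simp add: \<Psi>_def bij_betw_inv_into_left)
      show "\<forall>a'\<in>V. \<Psi> h (g (inv_into W h (f a'))) = a'"
      proof
        fix a assume a: "a \<in> V"
        have i: "inv_into W h (f a) \<in> W" using a fVW hbij by (metis bij_betw_def inv_into_into)
        have "h (inv_into W h (f a)) = f a" using a fVW hbij by (simp add: bij_betw_inv_into_right)
        then show "\<Psi> h (g (inv_into W h (f a))) = a" using i gW fg gf a by (simp add: \<Psi>_def)
      qed
      show "\<Psi> h ` V \<subseteq> V" using hW fVW gW by (auto simp: \<Psi>_def)
      show "(\<lambda>v. g (inv_into W h (f v))) ` V \<subseteq> V"
        using fVW gW hbij by (metis (no_types, lifting) bij_betw_def image_subsetI inv_into_into)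
    qed
    moreover have "\<Psi> h \<in> extensional V" by (simp add: \<Psi>_def)
    moreover have "\<forall>x\<in>V. \<forall>y\<in>V. E x y \<longleftrightarrow> E (\<Psi> h x) (\<Psi> h y)"
    proof (intro ballI)
      fix x y assume xy: "x \<in> V" "y \<in> V"
      have "E x y \<longleftrightarrow> E' (f x) (f y)" using E'f xy by simp
      also have "\<dots> \<longleftrightarrow> E' (h (f x)) (h (f y))" using hE xy fVW by blast
      also have "\<dots> \<longleftrightarrow> E (g (h (f x))) (g (h (f y)))" using hW fVW xy by (simp add: E'_def)
      finally show "E x y \<longleftrightarrow> E (\<Psi> h x) (\<Psi> h y)" using xy by (simp add: \<Psi>_def)
    qed
    ultimately show ?thesis by (simp add: A_def gag_carrier Bij_def)
  qed
  have \<Phi>B: "\<Phi> k \<in> carrier B" if k: "k \<in> carrier A" for k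
  proof -
    have kB: "k \<in> Bij V" and kE: "\<forall>x\<in>V. \<forall>y\<in>V. E x y \<longleftrightarrow> E (k x) (k y)"
      using k by (auto simp: A_def gag_carrier)
    have kV: "\<And>v. v \<in> V \<Longrightarrow> k v \<in> V" using kB Bij_imp_funcset by blast
    have kbij: "bij_betw k V V" using kB by (simp add: Bij_def)
    have "bij_betw (\<Phi> k) W W"
    proof (rule bij_betw_byWitness[where f'="\<lambda>w. f (inv_into V k (g w))"])
      show "\<forall>a\<in>W. f (inv_into V k (g (\<Phi> k a))) = a"
        using kV fVW gW fg gf kbij by (simp add: \<Phi>_def bij_betw_inv_into_left)
      show "\<forall>a'\<in>W. \<Phi> k (f (inv_into V k (g a'))) = a'"
      proof
        fix a assume a: "a \<in> W"
        have i: "inv_into V k (g a) \<in> V" using a gW kbij by (metis bij_betw_def inv_into_into)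
        have "k (inv_into V k (g a)) = g a" using a gW kbij by (simp add: bij_betw_inv_into_right)
        then show "\<Phi> k (f (inv_into V k (g a))) = a" using i gW fg gf a fVW by (simp add: \<Phi>_def)
      qed
      show "\<Phi> k ` W \<subseteq> W" using kV fVW gW by (auto simp: \<Phi>_def)
      show "(\<lambda>w. f (inv_into V k (g w))) ` W \<subseteq> W"
        using fVW gW kbij by (metis (no_types, lifting) bij_betw_def image_subsetI inv_into_into)
    qed
    moreover have "\<Phi> k \<in> extensional W" by (simp add: \<Phi>_def)
    moreover have "\<forall>x\<in>W. \<forall>y\<in>W. E' x y \<longleftrightarrow> E' (\<Phi> k x) (\<Phi> k y)"
    proof (intro ballI)
      fix x y assume xy: "x \<in> W" "y \<in> W"
      have "E' x y \<longleftrightarrow> E (g x) (g y)" using xy by (simp add: E'_def)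
      also have "\<dots> \<longleftrightarrow> E (k (g x)) (k (g y))" using kE xy gW by blast
      also have "\<dots> \<longleftrightarrow> E' (f (k (g x))) (f (k (g y)))" using kV gW xy E'f by simp
      finally show "E' x y \<longleftrightarrow> E' (\<Phi> k x) (\<Phi> k y)" using xy by (simp add: \<Phi>_def)
    qed
    ultimately show ?thesis by (simp add: B_def gag_carrier Bij_def)
  qed
  have \<Psi>\<Phi>: "\<Psi> (\<Phi> k) = k" if k: "k \<in> carrier A" for k
  proof -
    have kB: "k \<in> Bij V" using k by (auto simp: A_def gag_carrier)
    have kV: "\<And>v. v \<in> V \<Longrightarrow> k v \<in> V" using kB Bij_imp_funcset by blast
    have ke: "k \<in> extensional V" using kB Bij_imp_extensional by blast
    show ?thesis
    proof (rule extensionalityI[OF _ ke])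
      show "\<Psi> (\<Phi> k) \<in> extensional V" by (simp add: \<Psi>_def)
      fix v assume "v \<in> V" then show "\<Psi> (\<Phi> k) v = k v" using kV fVW gf by (simp add: \<Psi>_def \<Phi>_def)
    qed
  qed
  have \<Phi>\<Psi>: "\<Phi> (\<Psi> h) = h" if h: "h \<in> carrier B" for h
  proof -
    have hB: "h \<in> Bij W" using h by (auto simp: B_def gag_carrier)
    have hW: "\<And>v. v \<in> W \<Longrightarrow> h v \<in> W" using hB Bij_imp_funcset by blast
    have he: "h \<in> extensional W" using hB Bij_imp_extensional by blast
    show ?thesis
    proof (rule extensionalityI[OF _ he])
      show "\<Phi> (\<Psi> h) \<in> extensional W" by (simp add: \<Phi>_def)
      fix v assume "v \<in> W" then show "\<Phi> (\<Psi> h) v = h v" using hW gW fg by (simp add: \<Psi>_def \<Phi>_def)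
    qed
  qed
  have \<Psi>bij: "bij_betw \<Psi> (carrier B) (carrier A)"
    by (rule bij_betw_byWitness[where f'=\<Phi>]) (use \<Psi>A \<Phi>B \<Psi>\<Phi> \<Phi>\<Psi> in auto)
  have \<Psi>hom: "\<Psi> \<in> hom B A"
  proof (rule homI)
    fix h assume "h \<in> carrier B" then show "\<Psi> h \<in> carrier A" by (rule \<Psi>A)
  next
    fix h1 h2 assume h1: "h1 \<in> carrier B" and h2: "h2 \<in> carrier B"
    have h2W: "\<And>v. v \<in> W \<Longrightarrow> h2 v \<in> W" using h2 Bij_imp_funcset by (auto simp: B_def gag_carrier)
    have "\<Psi> (compose W h1 h2) = compose V (\<Psi> h1) (\<Psi> h2)"
    proof (rule extensionalityI)
      show "\<Psi> (compose W h1 h2) \<in> extensional V" by (simp add: \<Psi>_def)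
      show "compose V (\<Psi> h1) (\<Psi> h2) \<in> extensional V" by (simp add: compose_def)
      fix v assume v: "v \<in> V"
      have "\<Psi> h2 v \<in> V" using v fVW h2W gW by (simp add: \<Psi>_def)
      then show "\<Psi> (compose W h1 h2) v = compose V (\<Psi> h1) (\<Psi> h2) v"
        using v fVW h2W fg gW by (simp add: \<Psi>_def compose_def)
    qed
    then show "\<Psi> (h1 \<otimes>\<^bsub>B\<^esub> h2) = \<Psi> h1 \<otimes>\<^bsub>A\<^esub> \<Psi> h2"
      using h1 h2 \<Psi>A[OF h1] \<Psi>A[OF h2] by (simp add: A_def B_def gag_mult)
  qed
  have isoBA: "B \<cong> A" using \<Psi>bij \<Psi>hom by (auto simp: is_iso_def iso_def)
  have isoBG: "B \<cong> G" using iso_trans[OF isoBA] iso by (simp add: A_def)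
  have grpB: "group B" by (simp add: B_def gag_group)
  have carrA: "carrier A = \<Psi> ` carrier B" using \<Psi>bij by (simp add: bij_betw_def)
  have finW: "finite W" using finV by (simp add: W_def)
  have sgW: "simple_graph W E'"
    using sg by (auto simp: simple_graph_def E'_def)
  have rgW: "regular_graph W E'"
  proof -
    obtain k where k: "\<forall>v\<in>V. card {u\<in>V. E v u} = k" using rg by (auto simp: regular_graph_def)
    have "\<forall>w\<in>W. card {u\<in>W. E' w u} = k"
    proof
      fix w assume w: "w \<in> W"
      then obtain v where v: "v \<in> V" "w = f v" by (auto simp: W_def)
      have "{u\<in>W. E' w u} = f ` {u\<in>V. E v u}"
      proof
        show "{u\<in>W. E' w u} \<subseteq> f ` {u\<in>V. E v u}"
        proof
          fix u assume u: "u \<in> {u\<in>W. E' w u}"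
          then have "g u \<in> V" "u = f (g u)" using gW fg by auto
          moreover have "E v (g u)" using u v gf by (simp add: E'_def)
          ultimately show "u \<in> f ` {u\<in>V. E v u}" by blast
        qed
        show "f ` {u\<in>V. E v u} \<subseteq> {u\<in>W. E' w u}" using v fVW E'f by auto
      qed
      moreover have "inj_on f {u\<in>V. E v u}" using injf by (rule inj_on_subset) auto
      ultimately show "card {u\<in>W. E' w u} = k" using k v by (simp add: card_image)
    qed
    then show ?thesis by (auto simp: regular_graph_def)
  qed
  have one\<Psi>: "\<Psi> \<one>\<^bsub>B\<^esub> = \<one>\<^bsub>A\<^esub>"
    using hom_one[OF \<Psi>hom] grpB by (simp add: A_def gag_group)
  have semiW: "\<forall>h\<in>carrier B. \<forall>w\<in>W. h w = w \<longrightarrow> h = \<one>\<^bsub>B\<^esub>"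
  proof (intro ballI impI)
    fix h w assume h: "h \<in> carrier B" and w: "w \<in> W" and hw: "h w = w"
    have "\<Psi> h (g w) = g w" using w gW fg hw by (simp add: \<Psi>_def)
    then have "\<Psi> h = \<one>\<^bsub>A\<^esub>" using semi \<Psi>A[OF h] gW[OF w] unfolding A_def by blast
    then have "\<Phi> (\<Psi> h) = \<Phi> (\<Psi> \<one>\<^bsub>B\<^esub>)" using one\<Psi> by simp
    then show "h = \<one>\<^bsub>B\<^esub>" using \<Phi>\<Psi> h grpB group.is_monoid monoid.one_closed by metis
  qed
  have orbW: "card ((\<lambda>v. (\<lambda>h. h v) ` carrier B) ` W) = m"
  proof -
    have o: "(\<lambda>h. h (f v)) ` carrier B = f ` ((\<lambda>h. h v) ` carrier A)" if v: "v \<in> V" for v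
    proof -
      have "\<And>h. h \<in> carrier B \<Longrightarrow> h (f v) = f (\<Psi> h v)"
      proof -
        fix h assume h: "h \<in> carrier B"
        have "h (f v) \<in> W" using h v fVW Bij_imp_funcset by (fastforce simp: B_def gag_carrier)
        then show "h (f v) = f (\<Psi> h v)" using v fg by (simp add: \<Psi>_def)
      qed
      then have "(\<lambda>h. h (f v)) ` carrier B = (\<lambda>h. f (\<Psi> h v)) ` carrier B" by (auto intro: image_cong)
      also have "\<dots> = f ` ((\<lambda>h. h v) ` (\<Psi> ` carrier B))" by (simp add: image_image)
      finally show ?thesis using carrA by simp
    qed
    have "(\<lambda>v. (\<lambda>h. h v) ` carrier B) ` W = (\<lambda>v. (\<lambda>h. h (f v)) ` carrier B) ` V"
      by (simp add: W_def image_image)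
    also have "\<dots> = (image f) ` ((\<lambda>v. (\<lambda>h. h v) ` carrier A) ` V)"
      using o by (simp add: image_image cong: image_cong)
    finally have eq: "(\<lambda>v. (\<lambda>h. h v) ` carrier B) ` W = (image f) ` ((\<lambda>v. (\<lambda>h. h v) ` carrier A) ` V)" .
    have sub: "(\<lambda>v. (\<lambda>h. h v) ` carrier A) ` V \<subseteq> Pow V"
      using Bij_imp_funcset by (fastforce simp: A_def gag_carrier)
    have "inj_on (image f) ((\<lambda>v. (\<lambda>h. h v) ` carrier A) ` V)"
      using inj_on_subset[OF inj_on_image_Pow[OF injf] sub] .
    then show ?thesis using eq orb by (simp add: card_image A_def)
  qed
  have "subgroup (carrier B) B" using grpB group.subgroup_self by blast
  moreover have "B\<lparr>carrier := carrier B\<rparr> = B" by simp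
  ultimately show ?thesis unfolding has_m_GRR_def
    using finW sgW rgW isoBG semiW orbW unfolding B_def
    by (intro exI[of _ W] exI[of _ E'] exI[of _ "carrier (graph_aut_group W E')"]) auto
qed

definition rmul :: "('a, 'b) monoid_scheme \<Rightarrow> 'a \<Rightarrow> 'a \<Rightarrow> 'a" where
  "rmul G y = (\<lambda>g\<in>carrier G. g \<otimes>\<^bsub>G\<^esub> y)"

locale grr = group G for G (structure) +
  fixes R
  assumes fin: "finite (carrier G)" and Rsub: "R \<subseteq> carrier G"
    and Rinv: "\<And>r. r \<in> R \<Longrightarrow> inv r \<in> R" and R1: "\<one> \<notin> R"
    and aut: "graph_aut_group (carrier G) (cayley_adj G R) \<cong> G"
begin

lemma rmul_Bij: "y \<in> carrier G \<Longrightarrow> rmul G y \<in> Bij (carrier G)"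
proof -
  assume y: "y \<in> carrier G"
  have "bij_betw (rmul G y) (carrier G) (carrier G)"
  proof (rule bij_betw_byWitness[where f'="\<lambda>g. g \<otimes> inv y"])
    show "\<forall>a\<in>carrier G. rmul G y a \<otimes> inv y = a" using y by (simp add: rmul_def m_assoc)
    show "\<forall>a'\<in>carrier G. rmul G y (a' \<otimes> inv y) = a'" using y by (simp add: rmul_def m_assoc)
    show "rmul G y ` carrier G \<subseteq> carrier G" using y by (auto simp: rmul_def)
    show "(\<lambda>g. g \<otimes> inv y) ` carrier G \<subseteq> carrier G" using y by auto
  qed
  then show ?thesis by (simp add: Bij_def rmul_def)
qed

lemma rmul_aut: "y \<in> carrier G \<Longrightarrow> rmul G y \<in> carrier (graph_aut_group (carrier G) (cayley_adj G R))"
proof -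
  assume y: "y \<in> carrier G"
  have "\<forall>a\<in>carrier G. \<forall>b\<in>carrier G. cayley_adj G R a b \<longleftrightarrow> cayley_adj G R (rmul G y a) (rmul G y b)"
  proof (intro ballI)
    fix a b assume ab: "a \<in> carrier G" "b \<in> carrier G"
    have eq: "b \<otimes> y = r \<otimes> (a \<otimes> y) \<longleftrightarrow> b = r \<otimes> a" if r: "r \<in> R" for r
    proof -
      have rc: "r \<in> carrier G" using r Rsub by auto
      have "b \<otimes> y = r \<otimes> (a \<otimes> y) \<longleftrightarrow> b \<otimes> y = (r \<otimes> a) \<otimes> y" using rc ab y by (simp add: m_assoc)
      also have "\<dots> \<longleftrightarrow> b = r \<otimes> a" using rc ab y right_cancel by simp
      finally show ?thesis .
    qed
    then show "cayley_adj G R a b \<longleftrightarrow> cayley_adj G R (rmul G y a) (rmul G y b)"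
      using ab y eq by (auto simp: cayley_adj_def rmul_def)
  qed
  then show ?thesis using rmul_Bij[OF y] by (simp add: gag_carrier)
qed

lemma rmul_inj: "inj_on (rmul G) (carrier G)"
proof (rule inj_onI)
  fix x y assume "x \<in> carrier G" "y \<in> carrier G" "rmul G x = rmul G y"
  then have "rmul G x \<one> = rmul G y \<one>" by simp
  then show "x = y" using \<open>x \<in> carrier G\<close> \<open>y \<in> carrier G\<close> by (simp add: rmul_def)
qed

lemma aut_char: "carrier (graph_aut_group (carrier G) (cayley_adj G R)) = rmul G ` carrier G"
proof -
  let ?A = "carrier (graph_aut_group (carrier G) (cayley_adj G R))"
  have finA: "finite ?A" using iso_finite[OF aut] fin by simp
  have sub: "rmul G ` carrier G \<subseteq> ?A" using rmul_aut by auto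
  have "card (rmul G ` carrier G) = card (carrier G)" using rmul_inj by (simp add: card_image)
  also have "\<dots> = card ?A" using iso_same_card[OF aut] by simp
  finally show ?thesis using card_subset_eq[OF finA sub] by simp
qed

lemma noncomm:
  assumes "\<not> comm_group G"
  shows "\<exists>c\<in>carrier G. \<exists>x\<in>R. c \<otimes> x \<otimes> inv c \<notin> R"
proof (rule ccontr)
  assume "\<not> ?thesis"
  then have conj: "\<And>c x. c \<in> carrier G \<Longrightarrow> x \<in> R \<Longrightarrow> c \<otimes> x \<otimes> inv c \<in> R" by blast
  have "\<And>c g. c \<in> carrier G \<Longrightarrow> g \<in> carrier G \<Longrightarrow> c \<otimes> g = g \<otimes> c"
  proof -
    fix c g assume c: "c \<in> carrier G" and g: "g \<in> carrier G"
    define L where "L = (\<lambda>h\<in>carrier G. c \<otimes> h)"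
    have Lbij: "bij_betw L (carrier G) (carrier G)"
    proof (rule bij_betw_byWitness[where f'="\<lambda>h. inv c \<otimes> h"])
      show "\<forall>a\<in>carrier G. inv c \<otimes> L a = a" using c by (simp add: L_def m_assoc[symmetric])
      show "\<forall>a'\<in>carrier G. L (inv c \<otimes> a') = a'" using c by (simp add: L_def m_assoc[symmetric])
      show "L ` carrier G \<subseteq> carrier G" using c by (auto simp: L_def)
      show "(\<lambda>h. inv c \<otimes> h) ` carrier G \<subseteq> carrier G" using c by auto
    qed
    have "\<forall>a\<in>carrier G. \<forall>b\<in>carrier G. cayley_adj G R a b \<longleftrightarrow> cayley_adj G R (L a) (L b)"
    proof (intro ballI)
      fix a b assume ab: "a \<in> carrier G" "b \<in> carrier G"
      have "(\<exists>r\<in>R. b = r \<otimes> a) \<longleftrightarrow> (\<exists>r\<in>R. c \<otimes> b = r \<otimes> (c \<otimes> a))"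
      proof
        assume "\<exists>r\<in>R. b = r \<otimes> a"
        then obtain r where r: "r \<in> R" "b = r \<otimes> a" by blast
        have rc: "r \<in> carrier G" using r Rsub by auto
        have "(c \<otimes> r \<otimes> inv c) \<otimes> (c \<otimes> a) = c \<otimes> r \<otimes> (inv c \<otimes> (c \<otimes> a))" using rc c ab by (simp add: m_assoc)
        also have "\<dots> = c \<otimes> b" using r rc c ab by (simp add: m_assoc[symmetric])
        finally have "c \<otimes> b = (c \<otimes> r \<otimes> inv c) \<otimes> (c \<otimes> a)" by simp
        then show "\<exists>r\<in>R. c \<otimes> b = r \<otimes> (c \<otimes> a)" using conj[OF c r(1)] by blast
      next
        assume "\<exists>r\<in>R. c \<otimes> b = r \<otimes> (c \<otimes> a)"
        then obtain r where r: "r \<in> R" "c \<otimes> b = r \<otimes> (c \<otimes> a)" by blast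
        have rc: "r \<in> carrier G" using r Rsub by auto
        have "b = inv c \<otimes> (c \<otimes> b)" using c ab by (simp add: m_assoc[symmetric])
        also have "\<dots> = (inv c \<otimes> r \<otimes> inv (inv c)) \<otimes> a" using r rc c ab by (simp add: m_assoc)
        finally show "\<exists>r\<in>R. b = r \<otimes> a" using conj[OF inv_closed[OF c] r(1)] by blast
      qed
      then show "cayley_adj G R a b \<longleftrightarrow> cayley_adj G R (L a) (L b)"
        using ab c by (simp add: cayley_adj_def L_def)
    qed
    then have "L \<in> carrier (graph_aut_group (carrier G) (cayley_adj G R))"
      using Lbij by (simp add: gag_carrier Bij_def L_def)
    then obtain y where y: "y \<in> carrier G" "L = rmul G y" using aut_char by auto
    have "L \<one> = rmul G y \<one>" using y by simp
    then have "c = y" using c y by (simp add: L_def rmul_def)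
    have "L g = rmul G y g" using y by simp
    then show "c \<otimes> g = g \<otimes> c" using g \<open>c = y\<close> by (simp add: L_def rmul_def)
  qed
  then have "comm_group G" by (intro group_comm_groupI) auto
  then show False using assms by simp
qed

end

lemma has_GRR_grr:
  assumes "group G" "finite (carrier G)" "has_GRR G"
  shows "\<exists>R. grr G R"
  using assms unfolding has_GRR_def grr_def grr_axioms_def by blast

locale cons = grr G R for G (structure) and R +
  fixes c x
  assumes c: "c \<in> carrier G" and x: "x \<in> R" and ncj: "c \<otimes> x \<otimes> inv c \<notin> R"
begin

definition S where "S = {\<one>, c, c \<otimes> x}"
definition V :: "('a \<times> bool) set" where "V = carrier G \<times> UNIV"
definition E :: "'a \<times> bool \<Rightarrow> 'a \<times> bool \<Rightarrow> bool" where
  "E u v \<longleftrightarrow> fst u \<in> carrier G \<and> fst v \<in> carrier G \<and>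
     (if snd u = snd v then (\<exists>r\<in>R. fst v = r \<otimes> fst u)
      else if snd v then (\<exists>s\<in>S. fst v = s \<otimes> fst u) else (\<exists>s\<in>S. fst u = s \<otimes> fst v))"

lemma xc: "x \<in> carrier G" using x Rsub by auto
lemma x1: "x \<noteq> \<one>" using x R1 by auto
lemma c1: "c \<noteq> \<one>"
proof
  assume "c = \<one>"
  then have "c \<otimes> x \<otimes> inv c = x" using xc by simp
  then show False using ncj x by simp
qed
lemma cx1: "c \<otimes> x \<noteq> \<one>"
proof
  assume h: "c \<otimes> x = \<one>"
  then have "c = inv x" using c xc by (simp add: inv_equality)
  then have "c \<otimes> x \<otimes> inv c = x" using xc by (simp add: m_assoc)
  then show False using ncj x by simp
qed
lemma cxc: "c \<otimes> x \<noteq> c" using c xc x1 by simp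
lemma Ssub: "S \<subseteq> carrier G" using c xc by (auto simp: S_def)
lemma Rc: "r \<in> R \<Longrightarrow> r \<in> carrier G" using Rsub by auto
lemma Sc: "s \<in> S \<Longrightarrow> s \<in> carrier G" using Ssub by auto
lemma finR: "finite R" using fin Rsub finite_subset by blast
lemma finS: "finite S" by (simp add: S_def)
lemma cardS: "card S = 3" using c1 cx1 cxc by (auto simp: S_def)

lemma simple: "simple_graph V E"
proof -
  have sym: "E u v \<Longrightarrow> E v u" for u v
  proof -
    assume e: "E u v"
    obtain g i h j where u: "u = (g,i)" and v: "v = (h,j)" by (cases u, cases v) auto
    show "E v u"
    proof (cases "i = j")
      case True
      then obtain r where r: "r \<in> R" "h = r \<otimes> g" and gh: "g \<in> carrier G" "h \<in> carrier G"
        using e u v by (auto simp: E_def)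
      have "g = inv r \<otimes> h" using r gh Rc[OF r(1)] by (simp add: m_assoc[symmetric])
      then show ?thesis using True u v gh Rinv[OF r(1)] by (auto simp: E_def)
    next
      case False
      then show ?thesis using e u v by (auto simp: E_def)
    qed
  qed
  have irr: "\<not> E u u" for u
  proof
    assume "E u u"
    then obtain r where r: "r \<in> R" "fst u = r \<otimes> fst u" "fst u \<in> carrier G" by (auto simp: E_def)
    then have "r = \<one>" using Rc[OF r(1)] by simp
    then show False using r R1 by simp
  qed
  have "E u v \<Longrightarrow> u \<in> V \<and> v \<in> V" for u v
    by (cases u, cases v) (simp add: E_def V_def)
  then show ?thesis using sym irr unfolding simple_graph_def by blast
qed

definition N where "N v = {u\<in>V. E v u}"

lemma N0: "g \<in> carrier G \<Longrightarrow> N (g, False) = (\<lambda>r. (r \<otimes> g, False)) ` R \<union> (\<lambda>s. (s \<otimes> g, True)) ` S"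
  using Rc Sc by (auto simp: N_def E_def V_def)

lemma N1: "g \<in> carrier G \<Longrightarrow> N (g, True) = (\<lambda>r. (r \<otimes> g, True)) ` R \<union> (\<lambda>s. (inv s \<otimes> g, False)) ` S"
proof -
  assume g: "g \<in> carrier G"
  show ?thesis
  proof
    show "N (g, True) \<subseteq> (\<lambda>r. (r \<otimes> g, True)) ` R \<union> (\<lambda>s. (inv s \<otimes> g, False)) ` S"
    proof
      fix u assume u: "u \<in> N (g, True)"
      obtain h b where ub: "u = (h, b)" by (cases u)
      show "u \<in> (\<lambda>r. (r \<otimes> g, True)) ` R \<union> (\<lambda>s. (inv s \<otimes> g, False)) ` S"
      proof (cases b)
        case True
        then show ?thesis using u ub by (auto simp: N_def E_def)
      next
        case False
        then obtain s where s: "s \<in> S" "g = s \<otimes> h" and h: "h \<in> carrier G" using u ub by (auto simp: N_def E_def)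
        then have "h = inv s \<otimes> g" using Sc[OF s(1)] by (simp add: m_assoc[symmetric])
        then show ?thesis using ub False s by auto
      qed
    qed
    show "(\<lambda>r. (r \<otimes> g, True)) ` R \<union> (\<lambda>s. (inv s \<otimes> g, False)) ` S \<subseteq> N (g, True)"
    proof
      fix u assume "u \<in> (\<lambda>r. (r \<otimes> g, True)) ` R \<union> (\<lambda>s. (inv s \<otimes> g, False)) ` S"
      then show "u \<in> N (g, True)"
      proof
        assume "u \<in> (\<lambda>r. (r \<otimes> g, True)) ` R"
        then show ?thesis using g Rc by (auto simp: N_def E_def V_def)
      next
        assume "u \<in> (\<lambda>s. (inv s \<otimes> g, False)) ` S"
        then obtain s where s: "s \<in> S" "u = (inv s \<otimes> g, False)" by blast
        have "g = s \<otimes> (inv s \<otimes> g)" using Sc[OF s(1)] g by (simp add: m_assoc[symmetric])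
        then show ?thesis using s g Sc[OF s(1)] by (auto simp: N_def E_def V_def)
      qed
    qed
  qed
qed

lemma inj_r: "g \<in> carrier G \<Longrightarrow> inj_on (\<lambda>r. (r \<otimes> g, b)) R"
  by (rule inj_onI) (use Rc in auto)
lemma inj_s: "g \<in> carrier G \<Longrightarrow> inj_on (\<lambda>s. (s \<otimes> g, b)) S"
  by (rule inj_onI) (use Sc in auto)
lemma inj_s': "g \<in> carrier G \<Longrightarrow> inj_on (\<lambda>s. (inv s \<otimes> g, b)) S"
proof (rule inj_onI)
  fix s t assume g: "g \<in> carrier G" and st: "s \<in> S" "t \<in> S" "(inv s \<otimes> g, b) = (inv t \<otimes> g, b)"
  then have "inv s = inv t" using Sc by simp
  then show "s = t" using st Sc inv_inv by metis
qed

lemma cardN: "v \<in> V \<Longrightarrow> card (N v) = card R + 3"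
proof -
  assume "v \<in> V"
  then obtain g b where v: "v = (g,b)" "g \<in> carrier G" by (auto simp: V_def)
  show ?thesis
  proof (cases b)
    case False
    have "card (N v) = card ((\<lambda>r. (r \<otimes> g, False)) ` R) + card ((\<lambda>s. (s \<otimes> g, True)) ` S)"
      using v False N0 finR finS by (simp, intro card_Un_disjoint) auto
    then show ?thesis using card_image[OF inj_r[OF v(2), of False]] card_image[OF inj_s[OF v(2), of True]] cardS by simp
  next
    case True
    have "card (N v) = card ((\<lambda>r. (r \<otimes> g, True)) ` R) + card ((\<lambda>s. (inv s \<otimes> g, False)) ` S)"
      using v True N1 finR finS by (simp, intro card_Un_disjoint) auto
    then show ?thesis using card_image[OF inj_r[OF v(2), of True]] card_image[OF inj_s'[OF v(2), of False]] cardS by simp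
  qed
qed

lemma regular: "regular_graph V E"
  using cardN unfolding regular_graph_def N_def by blast

lemma finV: "finite V" using fin by (simp add: V_def)

end

definition tau :: "'v set \<Rightarrow> ('v \<Rightarrow> 'v \<Rightarrow> bool) \<Rightarrow> 'v \<Rightarrow> nat" where
  "tau V E v = (\<Sum>u\<in>{u\<in>V. E v u}. \<Sum>w\<in>{u\<in>V. E v u}. of_bool (E u w))"

lemma tau_aut:
  assumes phi: "\<phi> \<in> carrier (graph_aut_group V E)" and sg: "simple_graph V E" and v: "v \<in> V"
  shows "tau V E (\<phi> v) = tau V E v"
proof -
  have B: "\<phi> \<in> Bij V" and pE: "\<forall>x\<in>V. \<forall>y\<in>V. E x y \<longleftrightarrow> E (\<phi> x) (\<phi> y)"
    using phi by (auto simp: gag_carrier)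
  have bij: "bij_betw \<phi> V V" using B by (simp add: Bij_def)
  have inj: "inj_on \<phi> V" using bij by (simp add: bij_betw_def)
  have EV: "\<And>x y. E x y \<Longrightarrow> x \<in> V \<and> y \<in> V" using sg by (simp add: simple_graph_def)
  let ?N = "{u\<in>V. E v u}"
  have NN: "{u\<in>V. E (\<phi> v) u} = \<phi> ` ?N"
  proof
    show "\<phi> ` ?N \<subseteq> {u\<in>V. E (\<phi> v) u}" using pE v bij bij_betwE by fastforce
    show "{u\<in>V. E (\<phi> v) u} \<subseteq> \<phi> ` ?N"
    proof
      fix u assume u: "u \<in> {u\<in>V. E (\<phi> v) u}"
      then obtain u' where u': "u' \<in> V" "u = \<phi> u'" using bij by (auto simp: bij_betw_def)
      then have "E v u'" using pE v u by auto
      then show "u \<in> \<phi> ` ?N" using u' by auto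
    qed
  qed
  have injN: "inj_on \<phi> ?N" using inj by (rule inj_on_subset) auto
  have "tau V E (\<phi> v) = (\<Sum>u\<in>\<phi> ` ?N. \<Sum>w\<in>\<phi> ` ?N. of_bool (E u w))" by (simp add: tau_def NN)
  also have "\<dots> = (\<Sum>u\<in>?N. \<Sum>w\<in>?N. of_bool (E (\<phi> u) (\<phi> w)))"
    by (simp add: sum.reindex[OF injN])
  also have "\<dots> = (\<Sum>u\<in>?N. \<Sum>w\<in>?N. of_bool (E u w))"
    using pE by (intro sum.cong refl) auto
  finally show ?thesis by (simp add: tau_def)
qed

lemma sum_bool_unique:
  assumes "finite A" and "\<And>a b. a \<in> A \<Longrightarrow> b \<in> A \<Longrightarrow> P a \<Longrightarrow> P b \<Longrightarrow> a = b"
  shows "(\<Sum>a\<in>A. of_bool (P a) :: nat) = of_bool (\<exists>a\<in>A. P a)"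
proof (cases "\<exists>a\<in>A. P a")
  case True
  then obtain a0 where a0: "a0 \<in> A" "P a0" by blast
  have "(\<Sum>a\<in>A. of_bool (P a) :: nat) = (\<Sum>a\<in>A. if a = a0 then 1 else 0)"
    using assms(2) a0 by (intro sum.cong refl) auto
  also have "\<dots> = 1" using a0 assms(1) by (simp add: sum.delta)
  finally show ?thesis using True by simp
next
  case False
  then show ?thesis by simp
qed

lemma sum_sq_union:
  fixes f :: "'a \<Rightarrow> 'a \<Rightarrow> nat"
  assumes "finite A" "finite B" "A \<inter> B = {}"
  shows "(\<Sum>u\<in>A\<union>B. \<Sum>w\<in>A\<union>B. f u w) =
    (\<Sum>u\<in>A. \<Sum>w\<in>A. f u w) + (\<Sum>u\<in>A. \<Sum>w\<in>B. f u w) + (\<Sum>u\<in>B. \<Sum>w\<in>A. f u w) + (\<Sum>u\<in>B. \<Sum>w\<in>B. f u w)"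
  using assms by (simp add: sum.union_disjoint sum.distrib)

context cons begin

definition P where "P = (\<Sum>r\<in>R. \<Sum>r'\<in>R. of_bool (\<exists>r''\<in>R. r' = r'' \<otimes> r) :: nat)"
definition Y0 where "Y0 = (\<Sum>s\<in>S. \<Sum>s'\<in>S. of_bool (s' \<otimes> inv s \<in> R) :: nat)"
definition Y1 where "Y1 = (\<Sum>s\<in>S. \<Sum>s'\<in>S. of_bool (inv s' \<otimes> s \<in> R) :: nat)"

lemma Q0: "(\<Sum>r\<in>R. \<Sum>s\<in>S. of_bool (\<exists>s'\<in>S. s = s' \<otimes> r) :: nat) = Y1"
proof -
  have "(\<Sum>r\<in>R. \<Sum>s\<in>S. of_bool (\<exists>s'\<in>S. s = s' \<otimes> r) :: nat) =
        (\<Sum>r\<in>R. \<Sum>s\<in>S. \<Sum>s'\<in>S. of_bool (s = s' \<otimes> r))"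
  proof (intro sum.cong refl)
    fix r s assume r: "r \<in> R" and s: "s \<in> S"
    show "of_bool (\<exists>s'\<in>S. s = s' \<otimes> r) = (\<Sum>s'\<in>S. of_bool (s = s' \<otimes> r) :: nat)"
      by (rule sum_bool_unique[symmetric]) (use finS Sc Rc[OF r] in auto)
  qed
  also have "\<dots> = (\<Sum>s\<in>S. \<Sum>s'\<in>S. \<Sum>r\<in>R. of_bool (s = s' \<otimes> r))"
    by (subst sum.swap) (simp add: sum.swap[of _ R])
  also have "\<dots> = (\<Sum>s\<in>S. \<Sum>s'\<in>S. of_bool (\<exists>r\<in>R. s = s' \<otimes> r))"
  proof (intro sum.cong refl)
    fix s s' assume s: "s \<in> S" and s': "s' \<in> S"
    show "(\<Sum>r\<in>R. of_bool (s = s' \<otimes> r) :: nat) = of_bool (\<exists>r\<in>R. s = s' \<otimes> r)"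
      by (rule sum_bool_unique) (use finR Rc Sc[OF s'] in auto)
  qed
  also have "\<dots> = Y1" unfolding Y1_def
  proof (intro sum.cong refl arg_cong[where f=of_bool])
    fix s s' assume s: "s \<in> S" and s': "s' \<in> S"
    have sc: "s \<in> carrier G" "s' \<in> carrier G" using s s' Sc by auto
    show "(\<exists>r\<in>R. s = s' \<otimes> r) \<longleftrightarrow> inv s' \<otimes> s \<in> R"
    proof
      assume "\<exists>r\<in>R. s = s' \<otimes> r"
      then obtain r where "r \<in> R" "s = s' \<otimes> r" by blast
      then show "inv s' \<otimes> s \<in> R" using sc Rc by (simp add: m_assoc[symmetric])
    next
      assume "inv s' \<otimes> s \<in> R"
      moreover have "s = s' \<otimes> (inv s' \<otimes> s)" using sc by (simp add: m_assoc[symmetric])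
      ultimately show "\<exists>r\<in>R. s = s' \<otimes> r" by blast
    qed
  qed
  finally show ?thesis .
qed

lemma Q1: "(\<Sum>r\<in>R. \<Sum>s\<in>S. of_bool (\<exists>s'\<in>S. r = s' \<otimes> inv s) :: nat) = Y0"
proof -
  have "(\<Sum>r\<in>R. \<Sum>s\<in>S. of_bool (\<exists>s'\<in>S. r = s' \<otimes> inv s) :: nat) =
        (\<Sum>r\<in>R. \<Sum>s\<in>S. \<Sum>s'\<in>S. of_bool (r = s' \<otimes> inv s))"
  proof (intro sum.cong refl)
    fix r s assume r: "r \<in> R" and s: "s \<in> S"
    show "of_bool (\<exists>s'\<in>S. r = s' \<otimes> inv s) = (\<Sum>s'\<in>S. of_bool (r = s' \<otimes> inv s) :: nat)"
      by (rule sum_bool_unique[symmetric]) (use finS Sc Sc[OF s] in auto)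
  qed
  also have "\<dots> = (\<Sum>s\<in>S. \<Sum>s'\<in>S. \<Sum>r\<in>R. of_bool (r = s' \<otimes> inv s))"
    by (subst sum.swap) (simp add: sum.swap[of _ R])
  also have "\<dots> = Y0" unfolding Y0_def
  proof (intro sum.cong refl)
    fix s s' assume s: "s \<in> S" and s': "s' \<in> S"
    have "(\<Sum>r\<in>R. of_bool (r = s' \<otimes> inv s) :: nat) = of_bool (\<exists>r\<in>R. r = s' \<otimes> inv s)"
      by (rule sum_bool_unique) (use finR in auto)
    then show "(\<Sum>r\<in>R. of_bool (r = s' \<otimes> inv s) :: nat) = of_bool (s' \<otimes> inv s \<in> R)" by auto
  qed
  finally show ?thesis .
qed

end

context cons begin

lemma canc: "a \<in> carrier G \<Longrightarrow> b \<in> carrier G \<Longrightarrow> t \<in> carrier G \<Longrightarrow> g \<in> carrier G \<Longrightarrow>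
  b \<otimes> g = t \<otimes> (a \<otimes> g) \<longleftrightarrow> b = t \<otimes> a"
  by (metis m_assoc m_closed right_cancel)

lemma ex_canc: "a \<in> carrier G \<Longrightarrow> b \<in> carrier G \<Longrightarrow> g \<in> carrier G \<Longrightarrow> T \<subseteq> carrier G \<Longrightarrow>
  (\<exists>t\<in>T. b \<otimes> g = t \<otimes> (a \<otimes> g)) \<longleftrightarrow> (\<exists>t\<in>T. b = t \<otimes> a)"
  using canc by blast

lemma solve_r: "a \<in> carrier G \<Longrightarrow> b \<in> carrier G \<Longrightarrow> (\<exists>r\<in>R. b = r \<otimes> a) \<longleftrightarrow> b \<otimes> inv a \<in> R"
proof
  assume ab: "a \<in> carrier G" "b \<in> carrier G"
  { assume "\<exists>r\<in>R. b = r \<otimes> a"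
    then obtain r where "r \<in> R" "b = r \<otimes> a" by blast
    then show "b \<otimes> inv a \<in> R" using ab Rc by (simp add: m_assoc) }
  { assume "b \<otimes> inv a \<in> R"
    moreover have "b = (b \<otimes> inv a) \<otimes> a" using ab by (simp add: m_assoc)
    ultimately show "\<exists>r\<in>R. b = r \<otimes> a" by blast }
qed

lemma tau0: assumes g: "g \<in> carrier G" shows "tau V E (g, False) = P + 2 * Y1 + Y0"
proof -
  define A where "A = (\<lambda>r. (r \<otimes> g, False)) ` R"
  define B where "B = (\<lambda>s. (s \<otimes> g, True)) ` S"
  have NAB: "{u\<in>V. E (g,False) u} = A \<union> B" using N0[OF g] by (simp add: N_def A_def B_def)
  have dis: "A \<inter> B = {}" by (auto simp: A_def B_def)
  have fA: "finite A" "finite B" using finR finS by (auto simp: A_def B_def)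
  have t: "tau V E (g,False) = (\<Sum>u\<in>A. \<Sum>w\<in>A. of_bool (E u w)) + (\<Sum>u\<in>A. \<Sum>w\<in>B. of_bool (E u w))
     + (\<Sum>u\<in>B. \<Sum>w\<in>A. of_bool (E u w)) + (\<Sum>u\<in>B. \<Sum>w\<in>B. of_bool (E u w))"
    unfolding tau_def NAB by (rule sum_sq_union[OF fA dis])
  have 1: "(\<Sum>u\<in>A. \<Sum>w\<in>A. of_bool (E u w)) = P"
    unfolding A_def P_def sum.reindex[OF inj_r[OF g]] comp_def
  proof (intro sum.cong refl arg_cong[where f=of_bool])
    fix r r' assume "r \<in> R" "r' \<in> R"
    then show "E (r \<otimes> g, False) (r' \<otimes> g, False) = (\<exists>r''\<in>R. r' = r'' \<otimes> r)"
      using g Rc ex_canc[of r r' g R] Rsub by (simp add: E_def)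
  qed
  have 2: "(\<Sum>u\<in>A. \<Sum>w\<in>B. of_bool (E u w)) = Y1"
    unfolding A_def B_def sum.reindex[OF inj_r[OF g]] sum.reindex[OF inj_s[OF g]] comp_def Q0[symmetric]
  proof (intro sum.cong refl arg_cong[where f=of_bool])
    fix r s assume "r \<in> R" "s \<in> S"
    then show "E (r \<otimes> g, False) (s \<otimes> g, True) = (\<exists>s'\<in>S. s = s' \<otimes> r)"
      using g Rc Sc ex_canc[of r s g S] Ssub by (simp add: E_def)
  qed
  have 3: "(\<Sum>u\<in>B. \<Sum>w\<in>A. of_bool (E u w)) = Y1"
    unfolding A_def B_def sum.reindex[OF inj_r[OF g]] sum.reindex[OF inj_s[OF g]] comp_def Q0[symmetric]
    sum.swap[of _ S]
  proof (intro sum.cong refl arg_cong[where f=of_bool])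
    fix r s assume "r \<in> R" "s \<in> S"
    then show "E (s \<otimes> g, True) (r \<otimes> g, False) = (\<exists>s'\<in>S. s = s' \<otimes> r)"
      using g Rc Sc ex_canc[of r s g S] Ssub by (simp add: E_def)
  qed
  have 4: "(\<Sum>u\<in>B. \<Sum>w\<in>B. of_bool (E u w)) = Y0"
    unfolding B_def Y0_def sum.reindex[OF inj_s[OF g]] comp_def
  proof (intro sum.cong refl arg_cong[where f=of_bool])
    fix s s' assume "s \<in> S" "s' \<in> S"
    then show "E (s \<otimes> g, True) (s' \<otimes> g, True) = (s' \<otimes> inv s \<in> R)"
      using g Sc ex_canc[of s s' g R] Rsub solve_r[of s s'] by (simp add: E_def)
  qed
  show ?thesis using t 1 2 3 4 by simp
qed

lemma tau1: assumes g: "g \<in> carrier G" shows "tau V E (g, True) = P + 2 * Y0 + Y1"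
proof -
  define A where "A = (\<lambda>r. (r \<otimes> g, True)) ` R"
  define B where "B = (\<lambda>s. (inv s \<otimes> g, False)) ` S"
  have NAB: "{u\<in>V. E (g,True) u} = A \<union> B" using N1[OF g] by (simp add: N_def A_def B_def)
  have dis: "A \<inter> B = {}" by (auto simp: A_def B_def)
  have fA: "finite A" "finite B" using finR finS by (auto simp: A_def B_def)
  have t: "tau V E (g,True) = (\<Sum>u\<in>A. \<Sum>w\<in>A. of_bool (E u w)) + (\<Sum>u\<in>A. \<Sum>w\<in>B. of_bool (E u w))
     + (\<Sum>u\<in>B. \<Sum>w\<in>A. of_bool (E u w)) + (\<Sum>u\<in>B. \<Sum>w\<in>B. of_bool (E u w))"
    unfolding tau_def NAB by (rule sum_sq_union[OF fA dis])
  have 1: "(\<Sum>u\<in>A. \<Sum>w\<in>A. of_bool (E u w)) = P"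
    unfolding A_def P_def sum.reindex[OF inj_r[OF g]] comp_def
  proof (intro sum.cong refl arg_cong[where f=of_bool])
    fix r r' assume "r \<in> R" "r' \<in> R"
    then show "E (r \<otimes> g, True) (r' \<otimes> g, True) = (\<exists>r''\<in>R. r' = r'' \<otimes> r)"
      using g Rc ex_canc[of r r' g R] Rsub by (simp add: E_def)
  qed
  have 2: "(\<Sum>u\<in>A. \<Sum>w\<in>B. of_bool (E u w)) = Y0"
    unfolding A_def B_def sum.reindex[OF inj_r[OF g]] sum.reindex[OF inj_s'[OF g]] comp_def Q1[symmetric]
  proof (intro sum.cong refl arg_cong[where f=of_bool])
    fix r s assume "r \<in> R" "s \<in> S"
    then show "E (r \<otimes> g, True) (inv s \<otimes> g, False) = (\<exists>s'\<in>S. r = s' \<otimes> inv s)"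
      using g Rc Sc ex_canc[of "inv s" r g S] Ssub by (simp add: E_def)
  qed
  have 3: "(\<Sum>u\<in>B. \<Sum>w\<in>A. of_bool (E u w)) = Y0"
    unfolding A_def B_def sum.reindex[OF inj_r[OF g]] sum.reindex[OF inj_s'[OF g]] comp_def Q1[symmetric]
    sum.swap[of _ S]
  proof (intro sum.cong refl arg_cong[where f=of_bool])
    fix r s assume "r \<in> R" "s \<in> S"
    then show "E (inv s \<otimes> g, False) (r \<otimes> g, True) = (\<exists>s'\<in>S. r = s' \<otimes> inv s)"
      using g Rc Sc ex_canc[of "inv s" r g S] Ssub by (simp add: E_def)
  qed
  have 4: "(\<Sum>u\<in>B. \<Sum>w\<in>B. of_bool (E u w)) = Y1"
    unfolding B_def Y1_def sum.reindex[OF inj_s'[OF g]] comp_def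
  proof (intro sum.cong refl arg_cong[where f=of_bool])
    fix s s' assume s: "s \<in> S" "s' \<in> S"
    then show "E (inv s \<otimes> g, False) (inv s' \<otimes> g, False) = (inv s' \<otimes> s \<in> R)"
      using g Sc ex_canc[of "inv s" "inv s'" g R] Rsub solve_r[of "inv s" "inv s'"]
      by (simp add: E_def)
  qed
  show ?thesis using t 1 2 3 4 by simp
qed

end

context cons begin

lemma Rinv_iff: "a \<in> carrier G \<Longrightarrow> inv a \<in> R \<longleftrightarrow> a \<in> R"
  using Rinv inv_inv by metis

lemma f1: "c \<otimes> inv (c \<otimes> x) \<notin> R"
proof
  assume "c \<otimes> inv (c \<otimes> x) \<in> R"
  moreover have "c \<otimes> inv (c \<otimes> x) = inv (c \<otimes> x \<otimes> inv c)"
    using c xc by (simp add: inv_mult_group m_assoc)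
  ultimately show False using ncj Rinv_iff c xc by simp
qed
lemma f2: "inv (c \<otimes> x) \<otimes> c = inv x"
  using c xc by (simp add: inv_mult_group m_assoc)
lemma f3: "inv c \<otimes> (c \<otimes> x) = x"
  using c xc by (simp add: m_assoc[symmetric])

lemma Y0_val: "Y0 = 2 * of_bool (c \<in> R) + 2 * of_bool (c \<otimes> x \<in> R)"
  unfolding Y0_def S_def
  using c1 cx1 cxc c xc f1 ncj R1 Rinv_iff[of c] Rinv_iff[of "c \<otimes> x"]
  by (simp add: eq_commute[of \<one>] )

lemma Y1_val: "Y1 = 2 * of_bool (c \<in> R) + 2 * of_bool (c \<otimes> x \<in> R) + 2"
  unfolding Y1_def S_def
  using c1 cx1 cxc c xc f2 f3 x R1 Rinv_iff[of c] Rinv_iff[of "c \<otimes> x"] Rinv_iff[of x]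
  by (simp add: eq_commute[of \<one>])

lemma tau_diff: "g \<in> carrier G \<Longrightarrow> h \<in> carrier G \<Longrightarrow> tau V E (g, False) \<noteq> tau V E (h, True)"
  using tau0 tau1 Y0_val Y1_val by simp

end

context cons begin

lemma S_mult_fix:
  assumes w: "w \<in> carrier G" and SW: "\<And>s. s \<in> S \<Longrightarrow> s \<otimes> w \<in> S"
  shows "w = \<one>"
proof -
  have cc: "c \<otimes> x \<in> carrier G" using c xc by simp
  have "w \<in> S" using SW[of \<one>] w by (simp add: S_def)
  then have "w = \<one> \<or> w = c \<or> w = c \<otimes> x" by (simp add: S_def)
  moreover have "w \<noteq> c \<otimes> x"
  proof
    assume wd: "w = c \<otimes> x"
    have "c \<otimes> (c \<otimes> x) \<in> S" using SW[of c] wd by (simp add: S_def)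
    then have "c \<otimes> (c \<otimes> x) = \<one> \<or> c \<otimes> (c \<otimes> x) = c \<or> c \<otimes> (c \<otimes> x) = c \<otimes> x" by (simp add: S_def)
    moreover have "c \<otimes> (c \<otimes> x) \<noteq> c" using c cc cx1 by simp
    moreover have "c \<otimes> (c \<otimes> x) \<noteq> c \<otimes> x" using c cc c1 by simp
    moreover have "c \<otimes> (c \<otimes> x) \<noteq> \<one>"
    proof
      assume h: "c \<otimes> (c \<otimes> x) = \<one>"
      have "inv (c \<otimes> x) = c" using inv_equality[OF h cc c] .
      then have cxi: "c \<otimes> x = inv c" using cc by (metis inv_inv)
      have "x = inv c \<otimes> (c \<otimes> x)" using c xc by (simp add: m_assoc[symmetric])
      also have "\<dots> = inv c \<otimes> inv c" using cxi by simp
      finally have xe: "x = inv c \<otimes> inv c" .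
      have "c \<otimes> x \<otimes> inv c = inv c \<otimes> inv c" using cxi by simp
      then have "c \<otimes> x \<otimes> inv c = x" using xe by simp
      then show False using ncj x by simp
    qed
    ultimately show False by blast
  qed
  moreover have "w \<noteq> c"
  proof
    assume wc: "w = c"
    have "c \<otimes> c \<in> S" using SW[of c] wc by (simp add: S_def)
    then have "c \<otimes> c = \<one> \<or> c \<otimes> c = c \<or> c \<otimes> c = c \<otimes> x" by (simp add: S_def)
    moreover have "c \<otimes> c \<noteq> c" using c c1 by simp
    moreover have "c \<otimes> c \<noteq> c \<otimes> x"
    proof
      assume "c \<otimes> c = c \<otimes> x"
      then have "c = x" using c xc by simp
      then have "c \<otimes> x \<otimes> inv c = x" using xc by (simp add: m_assoc)
      then show False using ncj x by simp
    qed
    ultimately have cc1: "c \<otimes> c = \<one>" by blast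
    then have ic: "inv c = c" using inv_equality[OF cc1 c c] by simp
    have "c \<otimes> x \<otimes> c \<in> S" using SW[of "c \<otimes> x"] wc by (simp add: S_def)
    then have "c \<otimes> x \<otimes> c = \<one> \<or> c \<otimes> x \<otimes> c = c \<or> c \<otimes> x \<otimes> c = c \<otimes> x" by (simp add: S_def)
    moreover have "c \<otimes> x \<otimes> c \<noteq> c \<otimes> x" using c cc c1 by simp
    moreover have "c \<otimes> x \<otimes> c \<noteq> c"
    proof
      assume "c \<otimes> x \<otimes> c = c"
      then have "c \<otimes> x = \<one>" using c cc by simp
      then show False using cx1 by simp
    qed
    moreover have "c \<otimes> x \<otimes> c \<noteq> \<one>"
    proof
      assume h: "c \<otimes> x \<otimes> c = \<one>"
      have "inv c = c \<otimes> x" using inv_equality[OF h c cc] .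
      then have "c \<otimes> x = c \<otimes> \<one>" using ic c by simp
      then have "x = \<one>" using c xc by (metis l_cancel one_closed)
      then show False using x1 by simp
    qed
    ultimately show False by blast
  qed
  ultimately show ?thesis by blast
qed

definition rho where "rho y = (\<lambda>v\<in>V. (fst v \<otimes> y, snd v))"

lemma rho_aut: assumes y: "y \<in> carrier G" shows "rho y \<in> carrier (graph_aut_group V E)"
proof -
  have bij: "bij_betw (rho y) V V"
  proof (rule bij_betw_byWitness[where f'="rho (inv y)"])
    show "\<forall>a\<in>V. rho (inv y) (rho y a) = a" using y by (auto simp: rho_def V_def m_assoc)
    show "\<forall>a\<in>V. rho y (rho (inv y) a) = a" using y by (auto simp: rho_def V_def m_assoc)
    show "rho y ` V \<subseteq> V" using y by (auto simp: rho_def V_def)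
    show "rho (inv y) ` V \<subseteq> V" using y by (auto simp: rho_def V_def)
  qed
  have "\<forall>u\<in>V. \<forall>v\<in>V. E u v \<longleftrightarrow> E (rho y u) (rho y v)"
  proof (intro ballI)
    fix u v assume u: "u \<in> V" and v: "v \<in> V"
    obtain g i h j where uv: "u = (g,i)" "v = (h,j)" by (cases u, cases v) auto
    have gh: "g \<in> carrier G" "h \<in> carrier G" using u v uv by (auto simp: V_def)
    have e1: "(\<exists>t\<in>T. h \<otimes> y = t \<otimes> (g \<otimes> y)) \<longleftrightarrow> (\<exists>t\<in>T. h = t \<otimes> g)" if "T \<subseteq> carrier G" for T
      using ex_canc[OF gh(1) gh(2) y that] .
    have e2: "(\<exists>t\<in>T. g \<otimes> y = t \<otimes> (h \<otimes> y)) \<longleftrightarrow> (\<exists>t\<in>T. g = t \<otimes> h)" if "T \<subseteq> carrier G" for T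
      using ex_canc[OF gh(2) gh(1) y that] .
    show "E u v \<longleftrightarrow> E (rho y u) (rho y v)"
      using u v uv gh y e1[OF Rsub] e1[OF Ssub] e2[OF Ssub] by (simp add: rho_def E_def)
  qed
  then show ?thesis using bij by (simp add: gag_carrier Bij_def rho_def)
qed

lemma snd_pres:
  assumes phi: "\<phi> \<in> carrier (graph_aut_group V E)" and v: "v \<in> V"
  shows "\<phi> v \<in> V \<and> snd (\<phi> v) = snd v"
proof -
  have pv: "\<phi> v \<in> V" using phi v Bij_imp_funcset by (fastforce simp: gag_carrier)
  have t: "tau V E (\<phi> v) = tau V E v" using tau_aut[OF phi simple v] .
  obtain g i where gi: "v = (g,i)" "g \<in> carrier G" using v by (auto simp: V_def)
  obtain h j where hj: "\<phi> v = (h,j)" "h \<in> carrier G" using pv by (auto simp: V_def)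
  have "i = j"
  proof (rule ccontr)
    assume "i \<noteq> j"
    then show False using t gi hj tau_diff[of g h] tau_diff[of h g] by (cases i; cases j) auto
  qed
  then show ?thesis using pv gi hj by simp
qed

lemma side_aut:
  assumes phi: "\<phi> \<in> carrier (graph_aut_group V E)"
  shows "(\<lambda>g\<in>carrier G. fst (\<phi> (g, b))) \<in> carrier (graph_aut_group (carrier G) (cayley_adj G R))"
proof -
  define \<alpha> where "\<alpha> = (\<lambda>g\<in>carrier G. fst (\<phi> (g, b)))"
  have B: "\<phi> \<in> Bij V" and pE: "\<forall>x\<in>V. \<forall>y\<in>V. E x y \<longleftrightarrow> E (\<phi> x) (\<phi> y)"
    using phi by (auto simp: gag_carrier)
  have inj\<phi>: "inj_on \<phi> V" using B by (simp add: Bij_def bij_betw_def)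
  have pg: "\<And>g. g \<in> carrier G \<Longrightarrow> \<phi> (g, b) = (\<alpha> g, b) \<and> \<alpha> g \<in> carrier G"
  proof -
    fix g assume g: "g \<in> carrier G"
    then have "(g,b) \<in> V" by (simp add: V_def)
    then have "\<phi> (g,b) \<in> V \<and> snd (\<phi> (g,b)) = b" using snd_pres[OF phi] by simp
    then show "\<phi> (g, b) = (\<alpha> g, b) \<and> \<alpha> g \<in> carrier G" using g by (cases "\<phi> (g,b)") (auto simp: \<alpha>_def V_def)
  qed
  have sub: "\<alpha> ` carrier G \<subseteq> carrier G" using pg by auto
  have inj: "inj_on \<alpha> (carrier G)"
  proof (rule inj_onI)
    fix g h assume g: "g \<in> carrier G" and h: "h \<in> carrier G" and e: "\<alpha> g = \<alpha> h"
    then have "\<phi> (g,b) = \<phi> (h,b)" using pg by simp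
    then have "(g,b) = (h,b)" using inj\<phi> g h by (auto simp: V_def inj_on_def)
    then show "g = h" by simp
  qed
  have "\<alpha> ` carrier G = carrier G" using endo_inj_surj[OF fin sub inj] .
  then have bij: "bij_betw \<alpha> (carrier G) (carrier G)" using inj by (simp add: bij_betw_def)
  have "\<forall>g\<in>carrier G. \<forall>h\<in>carrier G. cayley_adj G R g h \<longleftrightarrow> cayley_adj G R (\<alpha> g) (\<alpha> h)"
  proof (intro ballI)
    fix g h assume g: "g \<in> carrier G" and h: "h \<in> carrier G"
    have "cayley_adj G R g h \<longleftrightarrow> E (g,b) (h,b)" using g h by (simp add: cayley_adj_def E_def)
    also have "\<dots> \<longleftrightarrow> E (\<phi> (g,b)) (\<phi> (h,b))" using pE g h by (simp add: V_def)
    also have "\<dots> \<longleftrightarrow> E (\<alpha> g, b) (\<alpha> h, b)" using pg g h by simp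
    also have "\<dots> \<longleftrightarrow> cayley_adj G R (\<alpha> g) (\<alpha> h)" using pg g h by (simp add: cayley_adj_def E_def)
    finally show "cayley_adj G R g h \<longleftrightarrow> cayley_adj G R (\<alpha> g) (\<alpha> h)" .
  qed
  then show ?thesis using bij by (simp add: gag_carrier Bij_def \<alpha>_def)
qed

lemma side_rmul:
  assumes phi: "\<phi> \<in> carrier (graph_aut_group V E)"
  shows "\<exists>y\<in>carrier G. \<forall>g\<in>carrier G. \<phi> (g, b) = (g \<otimes> y, b)"
proof -
  obtain y where y: "y \<in> carrier G" "(\<lambda>g\<in>carrier G. fst (\<phi> (g, b))) = rmul G y"
    using side_aut[OF phi, of b] aut_char by auto
  have "\<forall>g\<in>carrier G. \<phi> (g, b) = (g \<otimes> y, b)"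
  proof
    fix g assume g: "g \<in> carrier G"
    then have "fst (\<phi> (g, b)) = g \<otimes> y" using fun_cong[OF y(2), of g] by (simp add: rmul_def)
    moreover have "snd (\<phi> (g, b)) = b" using snd_pres[OF phi, of "(g,b)"] g by (simp add: V_def)
    ultimately show "\<phi> (g, b) = (g \<otimes> y, b)" by (simp add: prod_eq_iff)
  qed
  then show ?thesis using y(1) by blast
qed

lemma aut_rho:
  assumes phi: "\<phi> \<in> carrier (graph_aut_group V E)"
  shows "\<exists>y\<in>carrier G. \<phi> = rho y"
proof -
  obtain y where y: "y \<in> carrier G" "\<forall>g\<in>carrier G. \<phi> (g, False) = (g \<otimes> y, False)"
    using side_rmul[OF phi] by blast
  obtain z where z: "z \<in> carrier G" "\<forall>g\<in>carrier G. \<phi> (g, True) = (g \<otimes> z, True)"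
    using side_rmul[OF phi] by blast
  have pE: "\<forall>u\<in>V. \<forall>v\<in>V. E u v \<longleftrightarrow> E (\<phi> u) (\<phi> v)" using phi by (auto simp: gag_carrier)
  have "\<And>s. s \<in> S \<Longrightarrow> s \<otimes> (z \<otimes> inv y) \<in> S"
  proof -
    fix s assume s: "s \<in> S"
    have sc: "s \<in> carrier G" using Sc[OF s] .
    have "\<exists>s'\<in>S. s = s' \<otimes> \<one>" using sc s by (intro bexI[of _ s]) simp_all
    then have "E (\<one>, False) (s, True)" using s sc by (simp add: E_def)
    then have "E (\<phi> (\<one>, False)) (\<phi> (s, True))" using pE sc by (simp add: V_def)
    then have "E (y, False) (s \<otimes> z, True)" using y z sc by simp
    then obtain s' where s': "s' \<in> S" "s \<otimes> z = s' \<otimes> y" by (auto simp: E_def)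
    then have "s \<otimes> (z \<otimes> inv y) = s' \<otimes> y \<otimes> inv y" using sc z y Sc[OF s'(1)] by (simp add: m_assoc[symmetric])
    also have "\<dots> = s'" using y Sc[OF s'(1)] by (simp add: m_assoc)
    finally have "s \<otimes> (z \<otimes> inv y) = s'" .
    then show "s \<otimes> (z \<otimes> inv y) \<in> S" using s' by simp
  qed
  then have "z \<otimes> inv y = \<one>" using S_mult_fix y z by simp
  then have zy: "z = y" using y z by (metis inv_closed inv_equality inv_inv r_inv)
  have "\<phi> = rho y"
  proof (rule extensionalityI)
    show "\<phi> \<in> extensional V" using phi Bij_imp_extensional by (auto simp: gag_carrier)
    show "rho y \<in> extensional V" by (simp add: rho_def)
    fix v assume "v \<in> V"
    then obtain g b where v: "v = (g, b)" "g \<in> carrier G" by (auto simp: V_def)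
    then show "\<phi> v = rho y v" using y z zy by (cases b) (auto simp: rho_def V_def)
  qed
  then show ?thesis using y by blast
qed

end

context cons begin

lemma aut_carrier: "carrier (graph_aut_group V E) = rho ` carrier G"
  using aut_rho rho_aut by blast

lemma rho_app: "g \<in> carrier G \<Longrightarrow> rho y (g, b) = (g \<otimes> y, b)"
  by (simp add: rho_def V_def)

lemma aut_iso: "graph_aut_group V E \<cong> G"
proof -
  let ?A = "graph_aut_group V E"
  let ?f = "\<lambda>y. rho (inv y)"
  have hom: "?f \<in> hom G ?A"
  proof (rule homI)
    fix y assume "y \<in> carrier G" then show "?f y \<in> carrier ?A" by (simp add: rho_aut)
  next
    fix a b assume a: "a \<in> carrier G" and b: "b \<in> carrier G"
    have "rho (inv (a \<otimes> b)) = compose V (rho (inv a)) (rho (inv b))"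
    proof (rule extensionalityI)
      show "rho (inv (a \<otimes> b)) \<in> extensional V" by (simp add: rho_def)
      show "compose V (rho (inv a)) (rho (inv b)) \<in> extensional V" by (simp add: compose_def)
      fix v assume "v \<in> V"
      then obtain g i where v: "v = (g,i)" "g \<in> carrier G" by (auto simp: V_def)
      then show "rho (inv (a \<otimes> b)) v = compose V (rho (inv a)) (rho (inv b)) v"
        using a b by (simp add: rho_app compose_def V_def inv_mult_group m_assoc)
    qed
    then show "?f (a \<otimes> b) = ?f a \<otimes>\<^bsub>?A\<^esub> ?f b"
      using a b by (simp add: gag_mult rho_aut)
  qed
  have inj: "inj_on ?f (carrier G)"
  proof (rule inj_onI)
    fix a b assume a: "a \<in> carrier G" and b: "b \<in> carrier G" and e: "?f a = ?f b"
    then have "rho (inv a) (\<one>, False) = rho (inv b) (\<one>, False)" by simp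
    then have "inv a = inv b" using a b by (simp add: rho_app)
    then show "a = b" using a b by (metis inv_inv)
  qed
  have surj: "?f ` carrier G = carrier ?A"
  proof
    show "?f ` carrier G \<subseteq> carrier ?A" using rho_aut by auto
    show "carrier ?A \<subseteq> ?f ` carrier G"
    proof
      fix h assume "h \<in> carrier ?A"
      then obtain y where y: "y \<in> carrier G" "h = rho y" using aut_carrier by auto
      then have "h = ?f (inv y)" by simp
      then show "h \<in> ?f ` carrier G" using y by blast
    qed
  qed
  have "G \<cong> ?A" using hom inj surj by (auto simp: is_iso_def iso_def bij_betw_def)
  then show ?thesis by (rule iso_sym)
qed

lemma semireg: "\<forall>h\<in>carrier (graph_aut_group V E). \<forall>v\<in>V. h v = v \<longrightarrow> h = \<one>\<^bsub>graph_aut_group V E\<^esub>"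
proof (intro ballI impI)
  fix h v assume h: "h \<in> carrier (graph_aut_group V E)" and v: "v \<in> V" and hv: "h v = v"
  obtain y where y: "y \<in> carrier G" "h = rho y" using h aut_carrier by auto
  obtain g i where gi: "v = (g,i)" "g \<in> carrier G" using v by (auto simp: V_def)
  have "g \<otimes> y = g" using hv y gi by (simp add: rho_app)
  then have y1: "y = \<one>" using y gi by simp
  have "rho \<one> = (\<lambda>v\<in>V. v)"
    by (rule extensionalityI[where A=V]) (auto simp: rho_def V_def)
  then show "h = \<one>\<^bsub>graph_aut_group V E\<^esub>" using y y1 by (simp add: gag_one)
qed

lemma orbits: "card ((\<lambda>v. (\<lambda>h. h v) ` carrier (graph_aut_group V E)) ` V) = 2"
proof -
  have o: "(\<lambda>h. h v) ` carrier (graph_aut_group V E) = carrier G \<times> {snd v}" if v: "v \<in> V" for v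
  proof -
    obtain g i where gi: "v = (g,i)" "g \<in> carrier G" using v by (auto simp: V_def)
    have "(\<lambda>h. h v) ` carrier (graph_aut_group V E) = (\<lambda>y. (g \<otimes> y, i)) ` carrier G"
      unfolding aut_carrier image_image using gi by (simp add: rho_app)
    also have "\<dots> = carrier G \<times> {i}"
    proof
      show "(\<lambda>y. (g \<otimes> y, i)) ` carrier G \<subseteq> carrier G \<times> {i}" using gi by auto
      show "carrier G \<times> {i} \<subseteq> (\<lambda>y. (g \<otimes> y, i)) ` carrier G"
      proof
        fix u assume "u \<in> carrier G \<times> {i}"
        then obtain h where h: "u = (h, i)" "h \<in> carrier G" by auto
        have "h = g \<otimes> (inv g \<otimes> h)" using gi h by (simp add: m_assoc[symmetric])
        then show "u \<in> (\<lambda>y. (g \<otimes> y, i)) ` carrier G" using h gi by (intro image_eqI[of _ _ "inv g \<otimes> h"]) auto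
      qed
    qed
    finally show ?thesis using gi by simp
  qed
  have "(\<lambda>v. (\<lambda>h. h v) ` carrier (graph_aut_group V E)) ` V = (\<lambda>v. carrier G \<times> {snd v}) ` V"
    using o by (simp cong: image_cong)
  also have "\<dots> = {carrier G \<times> {False}, carrier G \<times> {True}}"
  proof
    show "(\<lambda>v. carrier G \<times> {snd v}) ` V \<subseteq> {carrier G \<times> {False}, carrier G \<times> {True}}"
      by auto
    have "(\<one>, False) \<in> V" "(\<one>, True) \<in> V" by (auto simp: V_def)
    then show "{carrier G \<times> {False}, carrier G \<times> {True}} \<subseteq> (\<lambda>v. carrier G \<times> {snd v}) ` V"
      by force
  qed
  also have "card \<dots> = 2"
  proof -
    have "carrier G \<times> {False} \<noteq> carrier G \<times> {True}" by auto
    then show ?thesis by simp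
  qed
  finally show ?thesis .
qed

lemma main: "has_m_GRR G 2"
  by (rule transfer_m_GRR[OF finV simple regular semireg orbits aut_iso])

end

theorem lemma3p8:
  fixes G :: "('a, 'b) monoid_scheme"
  assumes "group G" and "finite (carrier G)" and "\<not> comm_group G"
    and "has_GRR G"
  shows "has_m_GRR G 2"
proof -
  obtain R where R: "grr G R" using has_GRR_grr assms by blast
  obtain c x where cx: "c \<in> carrier G" "x \<in> R" "c \<otimes>\<^bsub>G\<^esub> x \<otimes>\<^bsub>G\<^esub> inv\<^bsub>G\<^esub> c \<notin> R"
    using grr.noncomm[OF R assms(3)] by blast
  interpret cons G R c x using R cx by (simp add: cons_def cons_axioms_def)
  show ?thesis by (rule main)
qed


end
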